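(* In the $K$-armed setting ($K\ge3$) described in the context, with $\Sigma_t$ the adapted Gram matrix and $\hat\Sigma_t$ the empirical Gram matrix generated by the SA Lasso Bandit algorithm, for every $t\ge\frac{2\log(2d^2)}{C_1(s_0)^2}$, where $C_1(s_0)=\min\!\Big(\frac12,\frac{\phi_0^2}{256s_0\nu C_{\mathcal{X}}x_{\max}^2}\Big)$, $$\mathbb{P}\Big(\|\Sigma_t-\hat\Sigma_t\|_\infty\ge\frac{\phi_0^2}{32s_0\nu C_{\mathcal{X}}}\Big)\le\exp\Big\{-\frac{tC_1(s_0)^2}{2}\Big\}.$$
   Context: Setting: in round $t$ the agent observes $\mathcal{X}_t=\{X_{t,1},\dots,X_{t,K}\}\subset\mathbb{R}^d$, i.i.d. over $t$ with joint density $p_{\mathcal{X}}$ on $\mathbb{R}^{Kd}$. Rewards $Y_{t,i}=\mu(X_{t,i}^\top\beta^* )+\epsilon_{t,i}$, $\mu$ known increasing, $S_0=\{j:\beta^*_j\ne0\}$, $s_0=|S_0|$; noises independent, zero conditional mean, $\sigma$-sub-Gaussian. SA Lasso Bandit (input $\lambda_0$): from initial $\hat\beta_1$, choose $a_t=\arg\max_iX_{t,i}^\top\hat\beta_t$, observe $Y_t=Y_{t,a_t}$, set $\lambda_t=\lambda_0\sqrt{(4\log t+2\log d)/t}$, $\hat\beta_{t+1}\in\arg\min_\beta\{\ell_t(\beta)+\lambda_t\|\beta\|_1\}$ with $\ell_t(\beta)=-\frac1t\sum_{\tau\le t}[Y_\tau X_\tau^\top\beta-m(X_\tau^\top\beta)]$,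 $\dot m=\mu$, $X_\tau=X_{\tau,a_\tau}$. $\mathcal{F}_t$ generated by $a_{1:t},X_{1:t},Y_{1:t}$. $\Sigma_t=\frac1t\sum_{\tau\le t}\mathbb{E}[X_\tau X_\tau^\top\mid\mathcal{F}_{\tau-1}]$, $\hat\Sigma_t=\frac1t\sum_{\tau\le t}X_\tau X_\tau^\top$, $\|M\|_\infty=\max_{i,j}|M_{ij}|$. Standing assumptions: $\|x\|_2\le x_{\max}$ for all features; $\kappa_0\le\dot\mu\le\kappa_1$; compatibility: with $\Sigma=\frac1K\mathbb{E}[\sum_iX_{t,i}X_{t,i}^\top]$, $\phi_0^2\|\beta_{S_0}\|_1^2\le s_0\beta^\top\Sigma\beta$ whenever $\|\beta_{S_0^c}\|_1\le3\|\beta_{S_0}\|_1$, for some $\phi_0^2>0$; relaxed symmetry $p_{\mathcal{X}}(-\mathbf{x})/p_{\mathcal{X}}(\mathbf{x})\le\nu<\infty$; balanced covariance with constant $C_{\mathcal{X}}<\infty$: for every permutation $(i_1,\dots,i_K)$, $k\in\{2,\dots,K-1\}$ and fixed $\beta$, $\mathbb{E}[X_{i_k}X_{i_k}^\top\mathbb{1}\{X_{i_1}^\top\beta<\dots<X_{i_K}^\top\beta\}]\preccurlyeq C_{\mathcal{X}}\mathbb{E}[(X_{i_1}X_{i_1}^\top+X_{i_K}X_{i_K}^\top)\mathbb{1}\{X_{i_1}^\top\beta<\dots<X_{i_K}^\top\beta\}]$. *)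

theory Defs
  imports "HOL-Probability.Probability"
begin

definition gens :: "'a measure \<Rightarrow> ('i \<Rightarrow> 'a \<Rightarrow> 'b) \<Rightarrow> 'i set \<Rightarrow> 'b measure \<Rightarrow> 'a set set" where
  "gens M f I N = (\<Union>i\<in>I. {f i -` A \<inter> space M | A. A \<in> sets N})"

definition outer :: "real^'d \<Rightarrow> real^'d^'d" where
  "outer x = (\<chi> i j. x $ i * x $ j)"

definition mexp :: "'a measure \<Rightarrow> ('a \<Rightarrow> real^'d^'d) \<Rightarrow> real^'d^'d" where
  "mexp M F = (\<chi> i j. integral\<^sup>L M (\<lambda>w. F w $ i $ j))"

definition psd_le :: "real^'d^'d \<Rightarrow> real^'d^'d \<Rightarrow> bool" where
  "psd_le A B \<longleftrightarrow> (\<forall>v. v \<bullet> (A *v v) \<le> v \<bullet> (B *v v))"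

definition maxnorm :: "real^'d^'d \<Rightarrow> real" where
  "maxnorm A = Max {\<bar>A $ i $ j\<bar> | i j. True}"

definition l1_on :: "'d set \<Rightarrow> real^'d \<Rightarrow> real" where
  "l1_on S b = (\<Sum>j\<in>S. \<bar>b $ j\<bar>)"

definition chosen :: "(nat \<Rightarrow> 'w \<Rightarrow> real^'d^'k) \<Rightarrow> (nat \<Rightarrow> 'w \<Rightarrow> 'k) \<Rightarrow> nat \<Rightarrow> 'w \<Rightarrow> real^'d" where
  "chosen ctx a t w = ctx t w $ a t w"

definition reward :: "(real \<Rightarrow> real) \<Rightarrow> real^'d \<Rightarrow> (nat \<Rightarrow> 'w \<Rightarrow> real^'d^'k) \<Rightarrow> (nat \<Rightarrow> 'k \<Rightarrow> 'w \<Rightarrow> real)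
    \<Rightarrow> (nat \<Rightarrow> 'w \<Rightarrow> 'k) \<Rightarrow> nat \<Rightarrow> 'w \<Rightarrow> real" where
  "reward mu bstar ctx eps a t w = mu (chosen ctx a t w \<bullet> bstar) + eps t (a t w) w"

definition filt :: "'w measure \<Rightarrow> (real \<Rightarrow> real) \<Rightarrow> real^'d \<Rightarrow> (nat \<Rightarrow> 'w \<Rightarrow> real^'d^'k)
    \<Rightarrow> (nat \<Rightarrow> 'k \<Rightarrow> 'w \<Rightarrow> real) \<Rightarrow> (nat \<Rightarrow> 'w \<Rightarrow> 'k) \<Rightarrow> nat \<Rightarrow> 'w measure" where
  "filt M mu bstar ctx eps a t = sigma (space M)
     (gens M (\<lambda>s w. (a s w, chosen ctx a s w, reward mu bstar ctx eps a s w)) {1..t}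
        (count_space UNIV \<Otimes>\<^sub>M borel \<Otimes>\<^sub>M borel))"

(* information before the noise of round t is revealed:
   sigma(X_{s,i} : s \<le> t; eps_{s,i} : s < t) *)
definition noise_info :: "'w measure \<Rightarrow> (nat \<Rightarrow> 'w \<Rightarrow> real^'d^'k) \<Rightarrow> (nat \<Rightarrow> 'k \<Rightarrow> 'w \<Rightarrow> real)
    \<Rightarrow> nat \<Rightarrow> 'w measure" where
  "noise_info M ctx eps t = sigma (space M)
     (gens M ctx {1..t} borel \<union> gens M (\<lambda>(s,i). eps s i) ({1..<t} \<times> UNIV) borel)"

definition lasso_obj :: "(real \<Rightarrow> real) \<Rightarrow> real \<Rightarrow> (nat \<Rightarrow> real^'d) \<Rightarrow> (nat \<Rightarrow> real) \<Rightarrow> nat \<Rightarrow> real^'d \<Rightarrow> real" where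
  "lasso_obj m lam X Y t b =
     - (1 / real t) * (\<Sum>\<tau>=1..t. Y \<tau> * (X \<tau> \<bullet> b) - m (X \<tau> \<bullet> b)) + lam * l1_on UNIV b"

definition lam_t :: "real \<Rightarrow> nat \<Rightarrow> nat \<Rightarrow> real" where
  "lam_t lam0 d t = lam0 * sqrt ((4 * ln (real t) + 2 * ln (real d)) / real t)"

definition adapted_gram :: "'w measure \<Rightarrow> (nat \<Rightarrow> 'w measure) \<Rightarrow> (nat \<Rightarrow> 'w \<Rightarrow> real^'d) \<Rightarrow> nat \<Rightarrow> 'w \<Rightarrow> real^'d^'d" where
  "adapted_gram M F X t w = (\<chi> i j. (1 / real t) *
      (\<Sum>\<tau>=1..t. real_cond_exp M (F (\<tau> - 1)) (\<lambda>w'. X \<tau> w' $ i * X \<tau> w' $ j) w))"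

definition emp_gram :: "(nat \<Rightarrow> 'w \<Rightarrow> real^'d) \<Rightarrow> nat \<Rightarrow> 'w \<Rightarrow> real^'d^'d" where
  "emp_gram X t w = (\<chi> i j. (1 / real t) * (\<Sum>\<tau>=1..t. X \<tau> w $ i * X \<tau> w $ j))"

end

theory Submission
  imports Defs
begin

lemma exp_le_quad: fixes y :: real assumes "\<bar>y\<bar> \<le> 1" shows "exp y \<le> 1 + y + y^2"
proof (cases "y \<ge> 0")
  case True then show ?thesis using exp_bound[of y] assms by auto
next
  case False
  have e: "exp (-y) \<ge> 1 - y" using exp_ge_add_one_self[of "-y"] by simp
  have "(1 + y + y^2) * (1 - y) = 1 - y^3" by (simp add: algebra_simps power2_eq_square power3_eq_cube)
  moreover have "y^3 \<le> 0" using False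
    by (metis less_eq_real_def mult_nonneg_nonpos not_le power3_eq_cube zero_le_square)
  ultimately have "(1 + y + y^2) * exp (-y) \<ge> 1"
  proof -
    have q: "(2*y+1)^2 = 4*y^2 + 4*y + 1" by (simp add: power2_eq_square algebra_simps)
    have "0 \<le> (2*y+1)^2" by simp
    then have p: "0 \<le> 1 + y + y^2" using q by linarith
    have "(1 + y + y^2) * (1 - y) \<le> (1 + y + y^2) * exp (-y)" by (rule mult_left_mono[OF e p])
    then show ?thesis using \<open>(1 + y + y^2) * (1 - y) = 1 - y^3\<close> \<open>y^3 \<le> 0\<close> by linarith
  qed
  then show ?thesis by (simp add: exp_minus field_simps)
qed

lemma subalg_mono:
  assumes "subalgebra M A" "subalgebra M B" "sets A \<subseteq> sets B" "f \<in> borel_measurable A"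
  shows "f \<in> borel_measurable B"
proof -
  have "subalgebra B A" using assms unfolding subalgebra_def by auto
  then show ?thesis using measurable_from_subalg assms(4) by blast
qed

lemma mgf_bound:
  fixes Z :: "nat \<Rightarrow> 'w \<Rightarrow> real" and G :: "nat \<Rightarrow> 'w measure"
  assumes P: "prob_space M"
  and sub: "\<And>n. subalgebra M (G n)"
  and mono: "\<And>n m. n \<le> m \<Longrightarrow> sets (G n) \<subseteq> sets (G m)"
  and Zm: "\<And>n. n \<ge> 1 \<Longrightarrow> Z n \<in> borel_measurable (G n)"
  and Zb: "\<And>n w. w \<in> space M \<Longrightarrow> \<bar>Z n w\<bar> \<le> B"
  and lam: "\<bar>l\<bar> * (2*B) \<le> 1"
  shows "(\<lambda>w. \<Sum>\<tau>=1..t. (Z \<tau> w - real_cond_exp M (G (\<tau>-1)) (Z \<tau>) w)) \<in> borel_measurable (G t) \<and>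
    (AE w in M. \<bar>\<Sum>\<tau>=1..t. (Z \<tau> w - real_cond_exp M (G (\<tau>-1)) (Z \<tau>) w)\<bar> \<le> 2*B*t) \<and>
    integral\<^sup>L M (\<lambda>w. exp (l * (\<Sum>\<tau>=1..t. (Z \<tau> w - real_cond_exp M (G (\<tau>-1)) (Z \<tau>) w)))) \<le> (1 + 4*l^2*B^2)^t"
proof -
  interpret prob_space M by fact
  have sfs: "sigma_finite_subalgebra M (G n)" for n
    by (rule finite_measure_subalgebra_is_sigma_finite) (simp add: finite_measure_subalgebra_def finite_measure_subalgebra_axioms_def sub finite_measure_axioms)
  have ZmM: "Z n \<in> borel_measurable M" if "n \<ge> 1" for n
    using measurable_from_subalg[OF sub Zm[OF that]] .
  have Zi: "integrable M (Z n)" if "n \<ge> 1" for n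
    by (rule integrable_const_bound[where B=B]) (use Zb ZmM[OF that] in auto)
  have Zlo: "-B \<le> Z n w" "Z n w \<le> B" if "w \<in> space M" for n w
    using Zb[OF that, of n] by linarith+
  define CE where "CE n = real_cond_exp M (G (n-1)) (Z n)" for n
  have CEm: "CE n \<in> borel_measurable (G (n-1))" for n unfolding CE_def by simp
  have CEb: "AE w in M. \<bar>CE n w\<bar> \<le> B" if "n \<ge> 1" for n
  proof -
    interpret sigma_finite_subalgebra M "G (n-1)" by (rule sfs)
    have "AE w in M. CE n w \<le> B" unfolding CE_def
      by (rule real_cond_exp_le_c) (use Zi[OF that] Zlo in auto)
    moreover have "AE w in M. CE n w \<ge> -B" unfolding CE_def
      by (rule real_cond_exp_ge_c) (use Zi[OF that] Zlo in auto)
    ultimately show ?thesis by auto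
  qed
  define D where "D n w = Z n w - CE n w" for n w
  have Db: "AE w in M. \<bar>D n w\<bar> \<le> 2*B" if "n \<ge> 1" for n
    using CEb[OF that] AE_space unfolding D_def
  proof eventually_elim
    case (elim w)
    then show ?case using Zb[of w n] abs_triangle_ineq4[of "Z n w" "CE n w"] by linarith
  qed
  show ?thesis unfolding CE_def[symmetric]
  proof (induction t)
    case 0
    then show ?case by simp
  next
    case (Suc t)
    define S where "S w = (\<Sum>\<tau>=1..t. (Z \<tau> w - CE \<tau> w))" for w
    have IH1: "S \<in> borel_measurable (G t)" and IH2: "AE w in M. \<bar>S w\<bar> \<le> 2*B*t"
      and IH3: "integral\<^sup>L M (\<lambda>w. exp (l * S w)) \<le> (1 + 4*l^2*B^2)^t"
      using Suc.IH unfolding S_def by auto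
    have Db1: "AE w in M. \<bar>D (Suc t) w\<bar> \<le> 2*B" using Db[of "Suc t"] by simp
    have SS: "(\<Sum>\<tau>=1..Suc t. (Z \<tau> w - CE \<tau> w)) = S w + D (Suc t) w" for w
      unfolding S_def D_def by simp
    have mG: "f \<in> borel_measurable (G t) \<Longrightarrow> f \<in> borel_measurable (G (Suc t))" for f
      by (rule subalg_mono[OF sub sub mono]) auto
    have SmM: "S \<in> borel_measurable M" using measurable_from_subalg[OF sub IH1] .
    have DmG: "D (Suc t) \<in> borel_measurable (G (Suc t))"
      unfolding D_def using Zm[of "Suc t"] mG[OF CEm[of "Suc t", simplified]] by measurable
    have DmM: "D (Suc t) \<in> borel_measurable M" using measurable_from_subalg[OF sub DmG] .
    have CEmM: "CE (Suc t) \<in> borel_measurable M" unfolding CE_def by simp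
    have m1: "(\<lambda>w. \<Sum>\<tau>=1..Suc t. (Z \<tau> w - CE \<tau> w)) \<in> borel_measurable (G (Suc t))"
      unfolding SS using mG[OF IH1] DmG by measurable
    have ae1: "AE w in M. \<bar>\<Sum>\<tau>=1..Suc t. (Z \<tau> w - CE \<tau> w)\<bar> \<le> 2*B*(Suc t)"
      using IH2 Db1 unfolding SS
    proof eventually_elim
      case (elim w)
      then show ?case by (simp add: algebra_simps)
    qed
    define f where "f w = exp (l * S w)" for w
    have fm: "f \<in> borel_measurable (G t)" unfolding f_def using IH1 by measurable
    have fmM: "f \<in> borel_measurable M" unfolding f_def using SmM by measurable
    have fb: "AE w in M. norm (f w) \<le> exp (\<bar>l\<bar> * (2*B*t))"
      using IH2 unfolding f_def
    proof eventually_elim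
      case (elim w)
      then have "l * S w \<le> \<bar>l\<bar> * (2*B*t)"
        by (metis abs_ge_self abs_mult mult_left_mono abs_ge_zero order.trans)
      then show "norm (exp (l * S w)) \<le> exp (\<bar>l\<bar> * (2*B*t))" by simp
    qed
    have fi: "integrable M f" by (rule integrable_const_bound[OF fb fmM])
    have ZmM1: "Z (Suc t) \<in> borel_measurable M" using ZmM[of "Suc t"] by simp
    have fZi: "integrable M (\<lambda>w. f w * Z (Suc t) w)"
    proof (rule integrable_const_bound[where B="exp (\<bar>l\<bar> * (2*B*t)) * B"])
      show "AE w in M. norm (f w * Z (Suc t) w) \<le> exp (\<bar>l\<bar> * (2*B*t)) * B"
        using fb AE_space
      proof eventually_elim
        case (elim w)
        then show ?case using Zb[of w "Suc t"] by (auto simp: abs_mult intro!: mult_mono)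
      qed
      show "(\<lambda>w. f w * Z (Suc t) w) \<in> borel_measurable M" using fmM ZmM1 by measurable
    qed
    have fCE: "integrable M (\<lambda>w. f w * CE (Suc t) w)" "integral\<^sup>L M (\<lambda>w. f w * CE (Suc t) w) = integral\<^sup>L M (\<lambda>w. f w * Z (Suc t) w)"
    proof -
      interpret sigma_finite_subalgebra M "G t" by (rule sfs)
      show "integrable M (\<lambda>w. f w * CE (Suc t) w)" unfolding CE_def
        using real_cond_exp_intg(1)[OF fZi fm ZmM1] by simp
      show "integral\<^sup>L M (\<lambda>w. f w * CE (Suc t) w) = integral\<^sup>L M (\<lambda>w. f w * Z (Suc t) w)" unfolding CE_def
        using real_cond_exp_intg(2)[OF fZi fm ZmM1] by simp
    qed
    define c where "c = 1 + 4*l^2*B^2"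
    have ae2: "AE w in M. exp (l * (S w + D (Suc t) w)) \<le> c * f w + l * (f w * Z (Suc t) w) - l * (f w * CE (Suc t) w)"
      using Db1
    proof eventually_elim
      case (elim w)
      then have db: "\<bar>D (Suc t) w\<bar> \<le> 2*B" .
      have y1: "\<bar>l * D (Suc t) w\<bar> \<le> 1"
        using db lam by (metis abs_ge_zero abs_mult mult_left_mono order.trans)
      have y2: "(l * D (Suc t) w)^2 \<le> 4*l^2*B^2"
      proof -
        have "(D (Suc t) w)^2 \<le> (2*B)^2" using db by (metis abs_ge_zero power2_abs power_mono)
        then have "l^2 * (D (Suc t) w)^2 \<le> l^2 * (4*B^2)" by (simp add: power_mult_distrib mult_left_mono)
        then show ?thesis by (simp add: power_mult_distrib)
      qed
      have "exp (l * (S w + D (Suc t) w)) = f w * exp (l * D (Suc t) w)"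
        unfolding f_def by (simp add: distrib_left exp_add)
      also have "\<dots> \<le> f w * (1 + l * D (Suc t) w + (l * D (Suc t) w)^2)"
        using exp_le_quad[OF y1] unfolding f_def by (intro mult_left_mono) auto
      also have "\<dots> \<le> f w * (c + l * D (Suc t) w)"
        using y2 unfolding c_def f_def by (intro mult_left_mono) auto
      also have "\<dots> = c * f w + l * (f w * Z (Suc t) w) - l * (f w * CE (Suc t) w)"
        unfolding D_def by (simp add: algebra_simps)
      finally show "exp (l * (S w + D (Suc t) w)) \<le> c * f w + l * (f w * Z (Suc t) w) - l * (f w * CE (Suc t) w)" .
    qed
    have "integral\<^sup>L M (\<lambda>w. exp (l * (\<Sum>\<tau>=1..Suc t. (Z \<tau> w - CE \<tau> w))))
        = integral\<^sup>L M (\<lambda>w. exp (l * (S w + D (Suc t) w)))" unfolding SS ..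
    also have "\<dots> \<le> integral\<^sup>L M (\<lambda>w. c * f w + l * (f w * Z (Suc t) w) - l * (f w * CE (Suc t) w))"
    proof (rule integral_mono_AE[OF _ _ ae2])
      show "integrable M (\<lambda>w. exp (l * (S w + D (Suc t) w)))"
      proof (rule integrable_const_bound[where B="exp (\<bar>l\<bar> * (2*B*(Suc t)))"])
        show "AE w in M. norm (exp (l * (S w + D (Suc t) w))) \<le> exp (\<bar>l\<bar> * (2*B*(Suc t)))"
          using ae1[unfolded SS]
        proof eventually_elim
          case (elim w)
          have "l * (S w + D (Suc t) w) \<le> \<bar>l * (S w + D (Suc t) w)\<bar>" by (rule abs_ge_self)
          also have "\<dots> = \<bar>l\<bar> * \<bar>S w + D (Suc t) w\<bar>" by (rule abs_mult)
          also have "\<dots> \<le> \<bar>l\<bar> * (2*B*(Suc t))" by (rule mult_left_mono[OF elim abs_ge_zero])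
          finally have "l * (S w + D (Suc t) w) \<le> \<bar>l\<bar> * (2*B*(Suc t))" .
          then show ?case by simp
        qed
        show "(\<lambda>w. exp (l * (S w + D (Suc t) w))) \<in> borel_measurable M" using SmM DmM by measurable
      qed
      show "integrable M (\<lambda>w. c * f w + l * (f w * Z (Suc t) w) - l * (f w * CE (Suc t) w))"
        by (intro Bochner_Integration.integrable_diff Bochner_Integration.integrable_add integrable_mult_right fi fZi fCE(1))
    qed
    also have "\<dots> = c * integral\<^sup>L M f"
      using fi fZi fCE by (simp add: Bochner_Integration.integral_diff Bochner_Integration.integral_add)
    also have "\<dots> \<le> c * (1 + 4*l^2*B^2)^t"
      using IH3 unfolding f_def c_def by (intro mult_left_mono) auto
    also have "\<dots> = (1 + 4*l^2*B^2)^(Suc t)" unfolding c_def by simp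
    finally show ?case using m1 ae1 by blast
  qed
qed

lemma vn: "(\<lambda>x::('b::real_normed_vector)^'n. x $ i) \<in> borel_measurable borel"
  by (intro borel_measurable_continuous_onI continuous_intros)

lemma filt_facts:
  fixes h :: "nat \<Rightarrow> 'w \<Rightarrow> 'b"
  assumes hm: "\<And>s. h s \<in> measurable M N"
  shows "subalgebra M (sigma (space M) (gens M h {1..n} N))"
    and "n \<le> m \<Longrightarrow> sets (sigma (space M) (gens M h {1..n} N)) \<subseteq> sets (sigma (space M) (gens M h {1..m} N))"
    and "1 \<le> s \<Longrightarrow> h s \<in> measurable (sigma (space M) (gens M h {1..s} N)) N"
proof -
  have pw: "gens M h I N \<subseteq> Pow (space M)" for I unfolding gens_def by auto
  have sm: "gens M h I N \<subseteq> sets M" for I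
    unfolding gens_def using measurable_sets[OF hm] by auto
  have sets_eq: "sets (sigma (space M) (gens M h I N)) = sigma_sets (space M) (gens M h I N)" for I
    using pw by (simp add: sets_measure_of)
  show "subalgebra M (sigma (space M) (gens M h {1..n} N))"
    unfolding subalgebra_def sets_eq using sets.sigma_sets_subset[OF sm] by (simp add: space_measure_of_conv)
  show "n \<le> m \<Longrightarrow> sets (sigma (space M) (gens M h {1..n} N)) \<subseteq> sets (sigma (space M) (gens M h {1..m} N))"
  proof -
    assume "n \<le> m"
    then have "gens M h {1..n} N \<subseteq> gens M h {1..m} N" unfolding gens_def by (intro UN_mono) auto
    then show "sets (sigma (space M) (gens M h {1..n} N)) \<subseteq> sets (sigma (space M) (gens M h {1..m} N))"
      unfolding sets_eq by (rule sigma_sets_mono')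
  qed
  assume s1: "1 \<le> s"
  show "h s \<in> measurable (sigma (space M) (gens M h {1..s} N)) N"
  proof (rule measurableI)
    fix x assume "x \<in> space (sigma (space M) (gens M h {1..s} N))"
    then have "x \<in> space M" by (simp add: space_measure_of_conv)
    then show "h s x \<in> space N" using measurable_space[OF hm] by blast
  next
    fix A assume A: "A \<in> sets N"
    have "h s -` A \<inter> space M \<in> gens M h {1..s} N" unfolding gens_def
      by (rule UN_I[of s]) (use A s1 in auto)
    then show "h s -` A \<inter> space (sigma (space M) (gens M h {1..s} N)) \<in> sets (sigma (space M) (gens M h {1..s} N))"
      unfolding sets_eq by (auto simp: space_measure_of_conv)
  qed
qed

theorem corollary4:
  fixes M :: "'w measure"
    and ctx :: "nat \<Rightarrow> 'w \<Rightarrow> real^'d^'k"          \<comment> \<open>context X_t = (X_{t,i})_i\<close>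
    and p :: "real^'d^'k \<Rightarrow> ennreal"                 \<comment> \<open>joint density on R^{Kd}\<close>
    and eps :: "nat \<Rightarrow> 'k \<Rightarrow> 'w \<Rightarrow> real"           \<comment> \<open>noises eps_{t,i}\<close>
    and sig :: real
    and mu mu' m :: "real \<Rightarrow> real" and kappa0 kappa1 :: real
    and bstar :: "real^'d" and xmax phi0 nu CX lam0 :: real
    and a :: "nat \<Rightarrow> 'w \<Rightarrow> 'k"                       \<comment> \<open>chosen arms\<close>
    and bhat :: "nat \<Rightarrow> 'w \<Rightarrow> real^'d"               \<comment> \<open>Lasso estimates\<close>
    and beta1 :: "real^'d"                            \<comment> \<open>initial estimate\<close>
  defines "K \<equiv> CARD('k)" and "d \<equiv> CARD('d)"
    and "S0 \<equiv> {j. bstar $ j \<noteq> 0}" and "s0 \<equiv> card {j. bstar $ j \<noteq> 0}"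
    and "X \<equiv> chosen ctx a" and "Y \<equiv> reward mu bstar ctx eps a"
    and "F \<equiv> filt M mu bstar ctx eps a"
    and "Sig0 \<equiv> (\<chi> j l. (1 / real CARD('k)) *
                   (\<Sum>i\<in>UNIV. integral\<^sup>L M (\<lambda>w. ctx 1 w $ i $ j * ctx 1 w $ i $ l)))"
    and "C1 \<equiv> min (1/2) (phi0^2 / (256 * real (card {j. bstar $ j \<noteq> 0}) * nu * CX * xmax^2))"
  assumes prob: "prob_space M"
    and K3: "CARD('k) \<ge> 3"
    \<comment> \<open>contexts i.i.d. over t with joint density p\<close>
    and ctx_dens: "\<And>t. distributed M lborel (ctx t) p"
    and ctx_indep: "prob_space.indep_vars M (\<lambda>_. borel) ctx UNIV"
    \<comment> \<open>noises: independent, zero conditional mean, sigma-sub-Gaussian\<close>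
    and eps_meas: "\<And>t i. eps t i \<in> borel_measurable M"
    and eps_indep: "prob_space.indep_vars M (\<lambda>_. borel) (\<lambda>(t,i). eps t i) UNIV"
    and eps_mean: "\<And>t i. AE w in M. real_cond_exp M (noise_info M ctx eps t) (eps t i) w = 0"
    and eps_subg: "\<And>t i l. integrable M (\<lambda>w. exp (l * eps t i w)) \<and>
         (AE w in M. real_cond_exp M (noise_info M ctx eps t) (\<lambda>w. exp (l * eps t i w)) w
                      \<le> exp (l^2 * sig^2 / 2))"
    \<comment> \<open>link function\<close>
    and mu_deriv: "\<And>x. (mu has_real_derivative mu' x) (at x)"
    and kappa: "\<And>x. kappa0 \<le> mu' x \<and> mu' x \<le> kappa1" and kappa0_pos: "0 < kappa0"
    and m_deriv: "\<And>x. (m has_real_derivative mu x) (at x)"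
    \<comment> \<open>bounded features\<close>
    and xmax: "\<And>t i w. w \<in> space M \<Longrightarrow> norm (ctx t w $ i) \<le> xmax"
    \<comment> \<open>compatibility condition\<close>
    and phi0_pos: "phi0^2 > 0"
    and compat: "\<And>b. l1_on (- S0) b \<le> 3 * l1_on S0 b \<Longrightarrow>
                      phi0^2 * (l1_on S0 b)^2 \<le> real s0 * (b \<bullet> (Sig0 *v b))"
    \<comment> \<open>relaxed symmetry\<close>
    and symm: "\<And>x. p (- x) \<le> ennreal nu * p x"
    \<comment> \<open>balanced covariance\<close>
    and CX_pos: "0 < CX"
    and balanced: "\<And>\<pi> k b. bij_betw \<pi> {1..CARD('k)} (UNIV :: 'k set) \<Longrightarrow> 2 \<le> k \<Longrightarrow> k \<le> CARD('k) - 1 \<Longrightarrow>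
        psd_le
          (mexp M (\<lambda>w. (if \<forall>r\<in>{1..<CARD('k)}. ctx 1 w $ \<pi> r \<bullet> b < ctx 1 w $ \<pi> (r+1) \<bullet> b
                         then outer (ctx 1 w $ \<pi> k) else 0)))
          (CX *\<^sub>R mexp M (\<lambda>w. (if \<forall>r\<in>{1..<CARD('k)}. ctx 1 w $ \<pi> r \<bullet> b < ctx 1 w $ \<pi> (r+1) \<bullet> b
                         then outer (ctx 1 w $ \<pi> 1) + outer (ctx 1 w $ \<pi> CARD('k)) else 0)))"
    \<comment> \<open>SA Lasso Bandit (measurable realisation of argmax / argmin)\<close>
    and a_meas: "\<And>t. a t \<in> measurable M (count_space UNIV)"
    and bhat_meas: "\<And>t. bhat t \<in> borel_measurable M"
    and bhat1: "\<And>w. w \<in> space M \<Longrightarrow> bhat 1 w = beta1"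
    and a_argmax: "\<And>t w i. 1 \<le> t \<Longrightarrow> w \<in> space M \<Longrightarrow> ctx t w $ i \<bullet> bhat t w \<le> ctx t w $ a t w \<bullet> bhat t w"
    and bhat_argmin: "\<And>t w b. 1 \<le> t \<Longrightarrow> w \<in> space M \<Longrightarrow>
        lasso_obj m (lam_t lam0 CARD('d) t) (\<lambda>\<tau>. X \<tau> w) (\<lambda>\<tau>. Y \<tau> w) t (bhat (t+1) w)
        \<le> lasso_obj m (lam_t lam0 CARD('d) t) (\<lambda>\<tau>. X \<tau> w) (\<lambda>\<tau>. Y \<tau> w) t b"
  shows "\<forall>t::nat. real t \<ge> 2 * ln (2 * real d ^ 2) / C1^2 \<longrightarrow>
           measure M {w \<in> space M. maxnorm (adapted_gram M F X t w - emp_gram X t w)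
                                    \<ge> phi0^2 / (32 * real s0 * nu * CX)}
           \<le> exp (- (real t * C1^2 / 2))"
  proof -
  interpret prob_space M by (rule prob)
  have finK: "finite (UNIV::'k set)" using K3 card.infinite by fastforce
  have nu_nn: "0 \<le> nu"
  proof (rule ccontr)
    assume "\<not> 0 \<le> nu"
    then have p0: "p x = 0" for x using symm[of "-x"] by (simp add: ennreal_neg)
    have "emeasure M (ctx 1 -` UNIV \<inter> space M) = (\<integral>\<^sup>+x. p x * indicator UNIV x \<partial>lborel)"
      by (rule distributed_emeasure[OF ctx_dens]) simp
    also have "\<dots> = 0" using p0 by simp
    finally show False using emeasure_space_1 by simp
  qed
  define C1' where "C1' = phi0^2 / (256 * real s0 * nu * CX * xmax^2)"
  have C1eq: "C1 = min (1/2) C1'" unfolding C1_def C1'_def s0_def ..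
  have C1'nn: "0 \<le> C1'" unfolding C1'_def using nu_nn CX_pos by (intro divide_nonneg_nonneg) auto
  show ?thesis
  proof (cases "C1 > 0")
    case False
    then have "C1 = 0" using C1eq C1'nn by linarith
    then show ?thesis using prob_le_1 by simp
  next
    case C1pos: True
    then have C1'pos: "C1' > 0" and C1le: "C1 \<le> C1'" "C1 \<le> 1/2" using C1eq by auto
    have den: "256 * real s0 * nu * CX * xmax^2 \<noteq> 0"
    proof
      assume "256 * real s0 * nu * CX * xmax^2 = 0"
      then have "C1' = 0" unfolding C1'_def by simp
      then show False using C1'pos by simp
    qed
    have "real s0 \<noteq> 0" "nu \<noteq> 0" using den by (metis mult_zero_left mult_zero_right)+
    then have s0pos: "real s0 > 0" and nupos: "nu > 0" using nu_nn by auto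
    define B where "B = xmax^2"
    have "xmax \<noteq> 0" using den by (metis mult_zero_right zero_power2)
    then have Bpos: "B > 0" unfolding B_def by simp
    define \<gamma> where "\<gamma> = phi0^2 / (32 * real s0 * nu * CX)"
    have \<gamma>eq: "\<gamma> = 8 * B * C1'"
      unfolding \<gamma>_def C1'_def B_def using s0pos nupos CX_pos Bpos[unfolded B_def] by (simp add: field_simps)
    define l0 where "l0 = C1 / (4*B)"
    have l0pos: "l0 > 0" unfolding l0_def using C1pos Bpos by simp
    have dpos: "real d \<ge> 1" unfolding d_def by simp
    define h where "h = (\<lambda>s w. (a s w, X s w, Y s w))"
    define N :: "('k \<times> (real^'d) \<times> real) measure" where "N = count_space UNIV \<Otimes>\<^sub>M borel \<Otimes>\<^sub>M borel"
    have Fdef: "F n = sigma (space M) (gens M h {1..n} N)" for n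
      unfolding F_def filt_def h_def N_def X_def Y_def ..
    have ctxm: "ctx s \<in> borel_measurable M" for s
      using distributed_measurable[OF ctx_dens[of s]] by (simp add: measurable_cong_sets[OF refl sets_lborel])
    have cntK: "countable (UNIV::'k set)" using finK by (rule countable_finite)
    have Xm: "X s \<in> borel_measurable M" for s
    proof -
      have "(\<lambda>w. ctx s w $ k) \<in> borel_measurable M" for k
        using measurable_compose[OF ctxm vn] .
      then have "(\<lambda>w. ctx s w $ (a s w)) \<in> borel_measurable M"
        using measurable_compose_countable'[where f="\<lambda>k w. ctx s w $ k" and g="a s" and I=UNIV, OF _ a_meas cntK]
        by blast
      then show ?thesis unfolding X_def chosen_def by simp
    qed
    have mucont: "continuous_on UNIV mu"
      using DERIV_isCont[OF mu_deriv] by (intro continuous_at_imp_continuous_on) auto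
    have Ym: "Y s \<in> borel_measurable M" for s
    proof -
      have e: "(\<lambda>w. eps s (a s w) w) \<in> borel_measurable M"
        using measurable_compose_countable'[where f="\<lambda>k w. eps s k w" and g="a s" and I=UNIV, OF _ a_meas cntK] eps_meas
        by blast
      have m: "(\<lambda>w. mu (X s w \<bullet> bstar)) \<in> borel_measurable M"
        using measurable_compose[OF _ borel_measurable_continuous_onI[OF mucont], of "\<lambda>w. X s w \<bullet> bstar"] Xm[of s]
        by measurable
      show ?thesis unfolding Y_def reward_def using e m X_def by simp
    qed
    have hm: "h s \<in> measurable M N" for s
      unfolding h_def N_def using a_meas[of s] Xm[of s] Ym[of s] by measurable
    have Fsub: "subalgebra M (F n)" for n unfolding Fdef by (rule filt_facts(1)[OF hm])
    have Fmono: "n \<le> m \<Longrightarrow> sets (F n) \<subseteq> sets (F m)" for n m unfolding Fdef by (rule filt_facts(2)[OF hm])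
    have hF: "1 \<le> s \<Longrightarrow> h s \<in> measurable (F s) N" for s unfolding Fdef by (rule filt_facts(3)[OF hm])
    have XF: "X s \<in> borel_measurable (F s)" if "1 \<le> s" for s
    proof -
      have "(\<lambda>w. fst (snd (h s w))) \<in> borel_measurable (F s)"
        using hF[OF that] unfolding N_def by measurable
      then show ?thesis unfolding h_def by simp
    qed
    define Z where "Z i j \<tau> w = X \<tau> w $ i * X \<tau> w $ j" for i j \<tau> w
    have ZF: "Z i j s \<in> borel_measurable (F s)" if "1 \<le> s" for i j s
      unfolding Z_def using measurable_compose[OF XF[OF that] vn, of i] measurable_compose[OF XF[OF that] vn, of j]
      by measurable
    have Zb: "\<bar>Z i j s w\<bar> \<le> B" if "w \<in> space M" for i j s w
    proof -
      have nx: "norm (X s w) \<le> xmax" unfolding X_def chosen_def using xmax[OF that] .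
      have x0: "0 \<le> xmax" using nx norm_ge_zero[of "X s w"] by linarith
      have "\<bar>Z i j s w\<bar> = \<bar>X s w $ i\<bar> * \<bar>X s w $ j\<bar>" unfolding Z_def by (simp add: abs_mult)
      also have "\<dots> \<le> norm (X s w) * norm (X s w)"
        by (intro mult_mono component_le_norm_cart) auto
      also have "\<dots> \<le> xmax * xmax" by (rule mult_mono[OF nx nx x0 norm_ge_zero])
      finally show ?thesis unfolding B_def by (simp add: power2_eq_square)
    qed
    show ?thesis
    proof (intro allI impI)
      fix t :: nat
      assume t: "2 * ln (2 * real d ^ 2) / C1^2 \<le> real t"
      define u where "u = real t * C1^2"
      have "1 \<le> real d ^ 2" using dpos by (simp add: one_le_power)
      then have lnpos: "ln (2 * real d ^ 2) > 0" by (intro ln_gt_zero) linarith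
      have u_ge: "u \<ge> 2 * ln (2 * real d ^ 2)" unfolding u_def using t C1pos by (simp add: field_simps)
      have "u > 0" using u_ge lnpos by linarith
      then have tpos: "real t > 0" unfolding u_def using C1pos by (simp add: zero_less_mult_iff)
      define S where "S i j w = (\<Sum>\<tau>=1..t. (Z i j \<tau> w - real_cond_exp M (F (\<tau>-1)) (Z i j \<tau>) w))" for i j w
      have mgf: "(\<lambda>w. S i j w) \<in> borel_measurable (F t) \<and> (AE w in M. \<bar>S i j w\<bar> \<le> 2*B*t) \<and>
          integral\<^sup>L M (\<lambda>w. exp (l * S i j w)) \<le> (1 + 4*l^2*B^2)^t" if "\<bar>l\<bar> * (2*B) \<le> 1" for l i j
      proof -
        note r = mgf_bound[where Z="Z i j" and G=F and B=B and l=l and M=M and t=t, OF prob Fsub Fmono ZF Zb that]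
        show ?thesis unfolding S_def by (rule r)
      qed
      have "l0 * (2*B) = C1/2" unfolding l0_def using Bpos by simp
      then have l0b: "\<bar>l0\<bar> * (2*B) \<le> 1" using l0pos C1le by simp
      have Sm: "S i j \<in> borel_measurable M" for i j
        by (rule measurable_from_subalg[OF Fsub[of t] conjunct1[OF mgf[OF l0b, of i j]]])
      have Sset: "{w \<in> space M. c \<le> \<sigma> * S i j w} \<in> sets M" for \<sigma> i j c
        using Sm[of i j] by measurable
      have tail: "measure M {w \<in> space M. \<sigma> * S i j w \<ge> real t * \<gamma>} \<le> exp (- (7/4 * u))"
        if \<sigma>: "\<sigma> \<in> {1, -1::real}" for \<sigma> i j
      proof -
        define l where "l = \<sigma> * l0"
        have absl: "\<bar>l\<bar> = l0" unfolding l_def using \<sigma> l0pos by auto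
        have lb: "\<bar>l\<bar> * (2*B) \<le> 1" using l0b absl by simp
        note mg = mgf[OF lb, of i j]
        have Sae: "AE w in M. \<bar>S i j w\<bar> \<le> 2*B*t" using mg by blast
        have Sint: "integral\<^sup>L M (\<lambda>w. exp (l * S i j w)) \<le> (1 + 4*l^2*B^2)^t" using mg by blast
        have ei: "integrable M (\<lambda>w. exp (l * S i j w))"
        proof (rule integrable_const_bound[where B="exp (\<bar>l\<bar> * (2*B*t))"])
          show "AE w in M. norm (exp (l * S i j w)) \<le> exp (\<bar>l\<bar> * (2*B*t))"
            using Sae
          proof eventually_elim
            case (elim w)
            have "l * S i j w \<le> \<bar>l * S i j w\<bar>" by (rule abs_ge_self)
            also have "\<dots> = \<bar>l\<bar> * \<bar>S i j w\<bar>" by (rule abs_mult)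
            also have "\<dots> \<le> \<bar>l\<bar> * (2*B*t)" by (rule mult_left_mono[OF elim abs_ge_zero])
            finally show ?case by simp
          qed
          show "(\<lambda>w. exp (l * S i j w)) \<in> borel_measurable M" using Sm[of i j] by measurable
        qed
        have "{w \<in> space M. \<sigma> * S i j w \<ge> real t * \<gamma>} \<subseteq> {w \<in> space M. exp (l * S i j w) \<ge> exp (l0 * (real t * \<gamma>))}"
        proof
          fix w assume "w \<in> {w \<in> space M. \<sigma> * S i j w \<ge> real t * \<gamma>}"
          then have w: "w \<in> space M" and hw: "real t * \<gamma> \<le> \<sigma> * S i j w" by auto
          from hw have "l0 * (real t * \<gamma>) \<le> l0 * (\<sigma> * S i j w)" using l0pos by (intro mult_left_mono) auto
          then have "exp (l0 * (real t * \<gamma>)) \<le> exp (l * S i j w)" unfolding l_def by (simp add: mult.assoc mult.left_commute)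
          then show "w \<in> {w \<in> space M. exp (l * S i j w) \<ge> exp (l0 * (real t * \<gamma>))}" using w by simp
        qed
        then have "measure M {w \<in> space M. \<sigma> * S i j w \<ge> real t * \<gamma>} \<le> measure M {w \<in> space M. exp (l * S i j w) \<ge> exp (l0 * (real t * \<gamma>))}"
          by (rule finite_measure_mono) (use Sm[of i j] in measurable)
        also have "\<dots> \<le> integral\<^sup>L M (\<lambda>w. exp (l * S i j w)) / exp (l0 * (real t * \<gamma>))"
          by (rule integral_Markov_inequality_measure[OF ei, of "space M"]) auto
        also have "\<dots> \<le> (1 + 4*l^2*B^2)^t / exp (l0 * (real t * \<gamma>))"
          by (rule divide_right_mono[OF Sint]) simp
        also have "\<dots> \<le> exp (u/4) / exp (2*u)"
        proof (rule frac_le)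
          have q: "4*l^2*B^2 = C1^2/4"
          proof -
            have "l^2 = l0^2" using absl by (metis power2_abs)
            then show ?thesis unfolding l0_def using Bpos by (simp add: power2_eq_square field_simps)
          qed
          have "(1 + 4*l^2*B^2)^t \<le> (exp (C1^2/4))^t"
            unfolding q by (rule power_mono) (use exp_ge_add_one_self[of "C1^2/4"] in auto)
          also have "\<dots> = exp (u/4)" unfolding u_def by (simp flip: exp_of_nat_mult)
          finally show "(1 + 4*l^2*B^2)^t \<le> exp (u/4)" .
          show "0 \<le> exp (u/4)" by simp
          show "0 < exp (2*u)" by simp
          have eq1: "l0 * (real t * \<gamma>) = 2 * real t * C1 * C1'" unfolding l0_def \<gamma>eq using Bpos by (simp add: field_simps)
          have ineq: "2 * real t * C1 * C1 \<le> 2 * real t * C1 * C1'"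
            using C1le C1pos tpos by (intro mult_left_mono) auto
          have e1: "2*u = 2 * real t * C1 * C1" unfolding u_def by (simp add: power2_eq_square)
          have "2*u \<le> l0 * (real t * \<gamma>)" using eq1 ineq e1 by linarith
          then show "exp (2*u) \<le> exp (l0 * (real t * \<gamma>))" by simp
        qed
        also have "\<dots> = exp (- (7/4 * u))" by (simp flip: exp_diff)
        finally show ?thesis .
      qed
      have entry: "(adapted_gram M F X t w - emp_gram X t w) $ i $ j = - (1 / real t) * S i j w" for w i j
        unfolding adapted_gram_def emp_gram_def S_def Z_def
        by (simp add: sum_subtractf right_diff_distrib)
      have incl: "{w \<in> space M. maxnorm (adapted_gram M F X t w - emp_gram X t w) \<ge> phi0^2 / (32 * real s0 * nu * CX)}
          \<subseteq> (\<Union>q\<in>UNIV \<times> UNIV \<times> {1, -1::real}. {w \<in> space M. snd (snd q) * S (fst q) (fst (snd q)) w \<ge> real t * \<gamma>})"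
      proof
        fix w assume "w \<in> {w \<in> space M. maxnorm (adapted_gram M F X t w - emp_gram X t w) \<ge> phi0^2 / (32 * real s0 * nu * CX)}"
        then have w: "w \<in> space M" and mx: "phi0^2 / (32 * real s0 * nu * CX) \<le> maxnorm (adapted_gram M F X t w - emp_gram X t w)" by auto
        define A where "A = adapted_gram M F X t w - emp_gram X t w"
        have "{\<bar>A $ i $ j\<bar> | i j. True} = (\<lambda>(i,j). \<bar>A $ i $ j\<bar>) ` UNIV" by auto
        then have fin: "finite {\<bar>A $ i $ j\<bar> | i j. True}" by simp
        have "maxnorm A \<in> {\<bar>A $ i $ j\<bar> | i j. True}" unfolding maxnorm_def
          by (rule Max_in[OF fin]) auto
        then obtain i j where ij: "maxnorm A = \<bar>A $ i $ j\<bar>" by auto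
        have "\<gamma> \<le> \<bar>A $ i $ j\<bar>" using mx ij unfolding A_def \<gamma>_def by simp
        also have "\<bar>A $ i $ j\<bar> = \<bar>S i j w\<bar> / real t" unfolding A_def entry using tpos by (simp add: abs_mult)
        finally have "real t * \<gamma> \<le> \<bar>S i j w\<bar>" using tpos by (simp add: field_simps)
        then have "real t * \<gamma> \<le> 1 * S i j w \<or> real t * \<gamma> \<le> (-1) * S i j w" by linarith
        then show "w \<in> (\<Union>q\<in>UNIV \<times> UNIV \<times> {1, -1::real}. {w \<in> space M. snd (snd q) * S (fst q) (fst (snd q)) w \<ge> real t * \<gamma>})"
        proof
          assume "real t * \<gamma> \<le> 1 * S i j w"
          then show ?thesis using w by (intro UN_I[of "(i, j, 1)"]) auto
        next
          assume "real t * \<gamma> \<le> (-1) * S i j w"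
          then show ?thesis using w by (intro UN_I[of "(i, j, -1)"]) auto
        qed
      qed
      have "measure M {w \<in> space M. maxnorm (adapted_gram M F X t w - emp_gram X t w) \<ge> phi0^2 / (32 * real s0 * nu * CX)}
          \<le> measure M (\<Union>q\<in>UNIV \<times> UNIV \<times> {1, -1::real}. {w \<in> space M. snd (snd q) * S (fst q) (fst (snd q)) w \<ge> real t * \<gamma>})"
        by (rule finite_measure_mono[OF incl], rule sets.finite_UN) (use Sset in auto)
      also have "\<dots> \<le> (\<Sum>q\<in>UNIV \<times> UNIV \<times> {1, -1::real}. measure M {w \<in> space M. snd (snd q) * S (fst q) (fst (snd q)) w \<ge> real t * \<gamma>})"
        by (rule finite_measure_subadditive_finite) (use Sset in auto)
      also have "\<dots> \<le> (\<Sum>q\<in>(UNIV::'d set) \<times> (UNIV::'d set) \<times> {1, -1::real}. exp (- (7/4 * u)))"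
      proof (rule sum_mono)
        fix q :: "'d \<times> 'd \<times> real" assume "q \<in> UNIV \<times> UNIV \<times> {1, -1::real}"
        then have "snd (snd q) \<in> {1, -1::real}" by auto
        then show "measure M {w \<in> space M. snd (snd q) * S (fst q) (fst (snd q)) w \<ge> real t * \<gamma>} \<le> exp (- (7/4 * u))"
          by (rule tail)
      qed
      also have "\<dots> = 2 * real d ^ 2 * exp (- (7/4 * u))"
        unfolding d_def by (simp add: card_cartesian_product power2_eq_square)
      also have "\<dots> \<le> exp (- (u / 2))"
      proof -
        have "2 * real d ^ 2 = exp (ln (2 * real d ^ 2))" using dpos by simp
        also have "\<dots> \<le> exp (5/4 * u)" using u_ge lnpos by simp
        finally have "2 * real d ^ 2 * exp (- (7/4 * u)) \<le> exp (5/4 * u) * exp (- (7/4 * u))"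
          by (intro mult_right_mono) auto
        also have "\<dots> = exp (- (u / 2))" by (simp flip: exp_add)
        finally show ?thesis .
      qed
      finally show "measure M {w \<in> space M. maxnorm (adapted_gram M F X t w - emp_gram X t w) \<ge> phi0^2 / (32 * real s0 * nu * CX)}
           \<le> exp (- (real t * C1^2 / 2))" unfolding u_def by simp
    qed
  qed
qed

end
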